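(* Let $\Gamma$ be a distance-regular graph with valency $k$ and diameter $D\geq 2$. Let $s$ be maximal such that for every vertex $x$ and all $y,z\in\Gamma(x)$ with $y\not\sim z$, there exists a co-clique of size at least $s$ in $\Delta(x)$ containing $y$ and $z$. Then (i) $s\geq \frac{k}{a_1+1}$; (ii) $c_2-1\geq \max\{\frac{s'(a_1+1)-k}{\binom{s'}{2}} : 2\leq s'\leq s\}$, and equality implies that $\Gamma$ is a Terwilliger graph.
   Context: A connected graph $\Gamma$ of diameter $D$ is distance-regular if there are integers $b_i,c_i$ ($0\le i\le D$) such that for any two vertices $x,y$ at distance $i$, exactly $c_i$ neighbours of $y$ are at distance $i-1$ from $x$ and exactly $b_i$ neighbours of $y$ are at distance $i+1$ from $x$. Then $\Gamma$ is regular of valency $k=b_0$, and $a_i:=k-b_i-c_i$. $\Gamma(x)$ denotes the set of neighbours of $x$, and the local graph $\Delta(x)$ is the subgraph induced on $\Gamma(x)$. A co-clique is a set of pairwise non-adjacent vertices. A Terwilliger graph is a connected non-complete graph such that for any two vertices $u,v$ at distance two, the subgraph induced on their common neighbours is a clique of size $\mu$, for some fixed $\mu\geq 1$. *)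

theory Defs
  imports Complex_Main
begin

definition simple_graph :: "'a set \<Rightarrow> ('a \<Rightarrow> 'a \<Rightarrow> bool) \<Rightarrow> bool" where
  "simple_graph V E \<longleftrightarrow> finite V \<and> V \<noteq> {} \<and>
     (\<forall>u v. E u v \<longrightarrow> u \<in> V \<and> v \<in> V) \<and>
     (\<forall>u v. E u v \<longrightarrow> E v u) \<and> (\<forall>u. \<not> E u u)"

definition adj_rel :: "'a set \<Rightarrow> ('a \<Rightarrow> 'a \<Rightarrow> bool) \<Rightarrow> ('a \<times> 'a) set" where
  "adj_rel V E = {(u, v). u \<in> V \<and> v \<in> V \<and> E u v}"

definition gdist :: "'a set \<Rightarrow> ('a \<Rightarrow> 'a \<Rightarrow> bool) \<Rightarrow> 'a \<Rightarrow> 'a \<Rightarrow> nat" where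
  "gdist V E x y = (LEAST n. (x, y) \<in> (adj_rel V E) ^^ n)"

definition connected_graph :: "'a set \<Rightarrow> ('a \<Rightarrow> 'a \<Rightarrow> bool) \<Rightarrow> bool" where
  "connected_graph V E \<longleftrightarrow> (\<forall>x\<in>V. \<forall>y\<in>V. \<exists>n. (x, y) \<in> (adj_rel V E) ^^ n)"

definition diameter :: "'a set \<Rightarrow> ('a \<Rightarrow> 'a \<Rightarrow> bool) \<Rightarrow> nat" where
  "diameter V E = Max {gdist V E x y | x y. x \<in> V \<and> y \<in> V}"

definition nbrs :: "('a \<Rightarrow> 'a \<Rightarrow> bool) \<Rightarrow> 'a \<Rightarrow> 'a set" where
  "nbrs E x = {y. E x y}"

definition distance_regular ::
  "'a set \<Rightarrow> ('a \<Rightarrow> 'a \<Rightarrow> bool) \<Rightarrow> (nat \<Rightarrow> nat) \<Rightarrow> (nat \<Rightarrow> nat) \<Rightarrow> bool" where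
  "distance_regular V E b c \<longleftrightarrow> simple_graph V E \<and> connected_graph V E \<and>
     (\<forall>x\<in>V. \<forall>y\<in>V.
        card {z \<in> nbrs E y. gdist V E x z = gdist V E x y + 1} = b (gdist V E x y) \<and>
        (gdist V E x y \<ge> 1 \<longrightarrow>
           card {z \<in> nbrs E y. gdist V E x z = gdist V E x y - 1} = c (gdist V E x y)))"

definition a_num :: "(nat \<Rightarrow> nat) \<Rightarrow> (nat \<Rightarrow> nat) \<Rightarrow> nat \<Rightarrow> nat" where
  "a_num b c i = b 0 - b i - c i"

definition coclique :: "('a \<Rightarrow> 'a \<Rightarrow> bool) \<Rightarrow> 'a set \<Rightarrow> bool" where
  "coclique E S \<longleftrightarrow> (\<forall>u\<in>S. \<forall>v\<in>S. \<not> E u v)"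

definition clique :: "('a \<Rightarrow> 'a \<Rightarrow> bool) \<Rightarrow> 'a set \<Rightarrow> bool" where
  "clique E S \<longleftrightarrow> (\<forall>u\<in>S. \<forall>v\<in>S. u \<noteq> v \<longrightarrow> E u v)"

definition local_coclique_prop :: "'a set \<Rightarrow> ('a \<Rightarrow> 'a \<Rightarrow> bool) \<Rightarrow> nat \<Rightarrow> bool" where
  "local_coclique_prop V E s \<longleftrightarrow>
     (\<forall>x\<in>V. \<forall>y z. E x y \<and> E x z \<and> y \<noteq> z \<and> \<not> E y z \<longrightarrow>
        (\<exists>S. S \<subseteq> nbrs E x \<and> coclique E S \<and> y \<in> S \<and> z \<in> S \<and> card S \<ge> s))"

definition complete_graph :: "'a set \<Rightarrow> ('a \<Rightarrow> 'a \<Rightarrow> bool) \<Rightarrow> bool" where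
  "complete_graph V E \<longleftrightarrow> (\<forall>u\<in>V. \<forall>v\<in>V. u \<noteq> v \<longrightarrow> E u v)"

definition terwilliger :: "'a set \<Rightarrow> ('a \<Rightarrow> 'a \<Rightarrow> bool) \<Rightarrow> bool" where
  "terwilliger V E \<longleftrightarrow> connected_graph V E \<and> \<not> complete_graph V E \<and>
     (\<exists>\<mu>::nat. \<mu> \<ge> 1 \<and> (\<forall>u\<in>V. \<forall>v\<in>V. gdist V E u v = 2 \<longrightarrow>
        clique E (nbrs E u \<inter> nbrs E v) \<and> card (nbrs E u \<inter> nbrs E v) = \<mu>))"

end

theory Submission
  imports Defs
begin


lemma sg_V: "simple_graph V E \<Longrightarrow> E x y \<Longrightarrow> x \<in> V \<and> y \<in> V"
  by (simp add: simple_graph_def)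
lemma sg_sym: "simple_graph V E \<Longrightarrow> E x y \<Longrightarrow> E y x"
  by (simp add: simple_graph_def)
lemma sg_irr: "simple_graph V E \<Longrightarrow> \<not> E x x"
  by (simp add: simple_graph_def)

lemma relpow1: "simple_graph V E \<Longrightarrow> (x,y) \<in> adj_rel V E ^^ 1 \<longleftrightarrow> E x y"
  by (auto simp: adj_rel_def simple_graph_def)

lemma relpow2: "simple_graph V E \<Longrightarrow> (x,y) \<in> adj_rel V E ^^ 2 \<longleftrightarrow> (\<exists>w. E x w \<and> E w y)"
proof -
  assume sg: "simple_graph V E"
  have "adj_rel V E ^^ 2 = adj_rel V E O adj_rel V E" by (simp add: numeral_2_eq_2 relpow_1)
  then show ?thesis using sg unfolding adj_rel_def simple_graph_def by blast
qed

lemma gdist_le: "(x,y) \<in> adj_rel V E ^^ n \<Longrightarrow> gdist V E x y \<le> n"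
  unfolding gdist_def by (rule Least_le)

lemma gdist_path: "connected_graph V E \<Longrightarrow> x \<in> V \<Longrightarrow> y \<in> V \<Longrightarrow> (x,y) \<in> adj_rel V E ^^ (gdist V E x y)"
  unfolding gdist_def connected_graph_def by (rule LeastI_ex) blast

lemma gdist_0_iff: "connected_graph V E \<Longrightarrow> x \<in> V \<Longrightarrow> y \<in> V \<Longrightarrow> gdist V E x y = 0 \<longleftrightarrow> x = y"
proof
  assume a: "connected_graph V E" "x \<in> V" "y \<in> V" "gdist V E x y = 0"
  have "(x,y) \<in> adj_rel V E ^^ (gdist V E x y)" by (rule gdist_path[OF a(1-3)])
  then have "(x,y) \<in> adj_rel V E ^^ 0" unfolding a(4) .
  then show "x = y" by simp
next
  assume "x = y"
  then have "(x,y) \<in> adj_rel V E ^^ 0" by simp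
  then have "gdist V E x y \<le> 0" by (rule gdist_le)
  then show "gdist V E x y = 0" by simp
qed

lemma gdist_1_iff: "simple_graph V E \<Longrightarrow> connected_graph V E \<Longrightarrow> x \<in> V \<Longrightarrow> y \<in> V \<Longrightarrow> gdist V E x y = 1 \<longleftrightarrow> E x y"
proof
  assume a: "simple_graph V E" "connected_graph V E" "x \<in> V" "y \<in> V" "gdist V E x y = 1"
  have "(x,y) \<in> adj_rel V E ^^ (gdist V E x y)" by (rule gdist_path[OF a(2-4)])
  then have "(x,y) \<in> adj_rel V E ^^ 1" unfolding a(5) .
  then show "E x y" using relpow1[OF a(1)] by blast
next
  assume a: "simple_graph V E" "connected_graph V E" "x \<in> V" "y \<in> V" "E x y"
  have "(x,y) \<in> adj_rel V E ^^ 1" using relpow1[OF a(1)] a(5) by blast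
  then have "gdist V E x y \<le> 1" by (rule gdist_le)
  moreover have "x \<noteq> y" using a(5) sg_irr[OF a(1)] by metis
  then have "gdist V E x y \<noteq> 0" using gdist_0_iff[OF a(2-4)] by simp
  ultimately show "gdist V E x y = 1" by linarith
qed

lemma gdist_le2: "simple_graph V E \<Longrightarrow> E x w \<Longrightarrow> E w z \<Longrightarrow> gdist V E x z \<le> 2"
  using gdist_le relpow2 by metis

lemma gdist_2: "simple_graph V E \<Longrightarrow> connected_graph V E \<Longrightarrow> E x w \<Longrightarrow> E w z \<Longrightarrow> x \<noteq> z \<Longrightarrow> \<not> E x z
  \<Longrightarrow> gdist V E x z = 2"
proof -
  assume a: "simple_graph V E" "connected_graph V E" "E x w" "E w z" "x \<noteq> z" "\<not> E x z"
  have V: "x \<in> V" "z \<in> V" using a sg_V by metis+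
  have "gdist V E x z \<le> 2" using gdist_le2 a by metis
  moreover have "gdist V E x z \<noteq> 0" using gdist_0_iff[OF a(2) V] a by simp
  moreover have "gdist V E x z \<noteq> 1" using gdist_1_iff[OF a(1,2) V] a by simp
  ultimately show ?thesis by linarith
qed

lemma gdist_2_imp: "simple_graph V E \<Longrightarrow> connected_graph V E \<Longrightarrow> x \<in> V \<Longrightarrow> z \<in> V \<Longrightarrow> gdist V E x z = 2
  \<Longrightarrow> x \<noteq> z \<and> \<not> E x z"
  using gdist_0_iff gdist_1_iff by fastforce

lemma drg_at: "distance_regular V E b c \<Longrightarrow> x \<in> V \<Longrightarrow> y \<in> V \<Longrightarrow>
  card {z \<in> nbrs E y. gdist V E x z = gdist V E x y + 1} = b (gdist V E x y) \<and>
        (gdist V E x y \<ge> 1 \<longrightarrow>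
           card {z \<in> nbrs E y. gdist V E x z = gdist V E x y - 1} = c (gdist V E x y))"
  unfolding distance_regular_def by blast

lemma drg_sg: "distance_regular V E b c \<Longrightarrow> simple_graph V E"
  and drg_conn: "distance_regular V E b c \<Longrightarrow> connected_graph V E"
  by (simp_all add: distance_regular_def)

lemma nbrs_sub: "simple_graph V E \<Longrightarrow> nbrs E x \<subseteq> V"
  by (auto simp: nbrs_def simple_graph_def)
lemma nbrs_fin: "simple_graph V E \<Longrightarrow> finite (nbrs E x)"
  using nbrs_sub by (metis simple_graph_def finite_subset)

lemma card_nbrs: assumes drg: "distance_regular V E b c" and x: "x \<in> V"
  shows "card (nbrs E x) = b 0"
proof -
  have sg: "simple_graph V E" and cg: "connected_graph V E" using drg drg_sg drg_conn by auto
  have g0: "gdist V E x x = 0" using gdist_0_iff[OF cg x x] by simp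
  have "card {z \<in> nbrs E x. gdist V E x z = gdist V E x x + 1} = b (gdist V E x x)"
    using drg x unfolding distance_regular_def by blast
  moreover have "{z \<in> nbrs E x. gdist V E x z = gdist V E x x + 1} = nbrs E x"
    using g0 gdist_1_iff[OF sg cg] sg_V[OF sg] by (auto simp: nbrs_def)
  ultimately show ?thesis using g0 by simp
qed

lemma card_a1: assumes drg: "distance_regular V E b c" and e: "E x w"
  shows "card (nbrs E w \<inter> nbrs E x) = a_num b c 1"
proof -
  have sg: "simple_graph V E" and cg: "connected_graph V E" using drg drg_sg drg_conn by auto
  have V: "x \<in> V" "w \<in> V" using sg_V[OF sg e] by auto
  have g1: "gdist V E x w = 1" using gdist_1_iff[OF sg cg V] e by simp
  define P where "P j = {z \<in> nbrs E w. gdist V E x z = j}" for j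
  have "card (P 2) = b 1" "card (P 0) = c 1"
    using drg_at[OF drg V] g1 unfolding P_def by (simp_all add: numeral_2_eq_2)
  have P1: "P 1 = nbrs E w \<inter> nbrs E x"
    using gdist_1_iff[OF sg cg] sg_V[OF sg] V by (auto simp: P_def nbrs_def)
  have "nbrs E w = P 0 \<union> (P 1 \<union> P 2)"
  proof -
    have "gdist V E x z \<le> 2" if "z \<in> nbrs E w" for z
      using gdist_le2[OF sg e] that by (simp add: nbrs_def)
    then show ?thesis unfolding P_def by force
  qed
  moreover have fin: "finite (P j)" for j using nbrs_fin[OF sg] by (simp add: P_def)
  moreover have dj: "i \<noteq> j \<Longrightarrow> P i \<inter> P j = {}" for i j by (auto simp: P_def)
  ultimately have "card (nbrs E w) = card (P 0) + card (P 1) + card (P 2)"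
    using card_Un_disjoint[OF fin fin, of 1 2] card_Un_disjoint[OF fin finite_UnI[OF fin fin], of 0 1 2] dj[of 0 1] dj[of 0 2] dj[of 1 2]
    by (simp add: Int_Un_distrib)
  then have "card (P 1) = a_num b c 1" unfolding a_num_def
    using card_nbrs[OF drg V(2)] \<open>card (P 2) = b 1\<close> \<open>card (P 0) = c 1\<close> by linarith
  then show ?thesis unfolding P1 .
qed

lemma card_c2: assumes drg: "distance_regular V E b c" and V: "u \<in> V" "v \<in> V" and g: "gdist V E u v = 2"
  shows "card (nbrs E u \<inter> nbrs E v) = c 2"
proof -
  have sg: "simple_graph V E" and cg: "connected_graph V E" using drg drg_sg drg_conn by auto
  have "card {z \<in> nbrs E v. gdist V E u z = gdist V E u v - 1} = c (gdist V E u v)"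
    using drg_at[OF drg V] g by simp
  moreover have "{z \<in> nbrs E v. gdist V E u z = gdist V E u v - 1} = nbrs E u \<inter> nbrs E v"
  proof (intro set_eqI iffI)
    fix z assume "z \<in> {z \<in> nbrs E v. gdist V E u z = gdist V E u v - 1}"
    then have "E v z" "gdist V E u z = 1" using g by (auto simp: nbrs_def)
    then show "z \<in> nbrs E u \<inter> nbrs E v" using gdist_1_iff[OF sg cg V(1), of z] sg_V[OF sg] by (auto simp: nbrs_def)
  next
    fix z assume "z \<in> nbrs E u \<inter> nbrs E v"
    then have "E v z" "E u z" by (auto simp: nbrs_def)
    then show "z \<in> {z \<in> nbrs E v. gdist V E u z = gdist V E u v - 1}"
      using gdist_1_iff[OF sg cg V(1), of z] sg_V[OF sg] g by (auto simp: nbrs_def)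
  qed
  ultimately show ?thesis using g by simp
qed


lemma coclique_sub: "coclique E T \<Longrightarrow> S \<subseteq> T \<Longrightarrow> coclique E S"
  by (auto simp: coclique_def)

lemma count_lemma:
  fixes A :: "'a set" and a :: nat
  assumes "finite T" "finite A" "T \<subseteq> A" "coclique E T" "\<forall>u. \<not> E u u"
    "\<forall>w\<in>T. card (nbrs E w \<inter> A) = a"
  shows "2 * int (card (\<Union>u\<in>T. insert u (nbrs E u \<inter> A))) \<ge> 2 * int (card T) * (int a + 1)
     - (\<Sum>u\<in>T. \<Sum>v\<in>T-{u}. int (card (nbrs E u \<inter> nbrs E v \<inter> A)))"
  using assms
proof (induction T rule: finite_induct)
  case empty
  then show ?case by simp
next
  case (insert w F)
  define g where "g u v = int (card (nbrs E u \<inter> nbrs E v \<inter> A))" for u v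
  define U where "U = (\<Union>u\<in>F. insert u (nbrs E u \<inter> A))"
  define N where "N = insert w (nbrs E w \<inter> A)"
  have IH: "2 * int (card U) \<ge> 2 * int (card F) * (int a + 1) - (\<Sum>u\<in>F. \<Sum>v\<in>F-{u}. g u v)"
    using insert.IH insert.prems coclique_sub[of E "insert w F" F] unfolding U_def g_def by auto
  have finA: "finite (nbrs E u \<inter> A)" for u using insert.prems by simp
  have fU: "finite U" unfolding U_def using insert.hyps finA by simp
  have fN: "finite N" unfolding N_def using finA by simp
  have cN: "card N = a + 1" unfolding N_def using insert.prems finA[of w]
    by (simp add: nbrs_def)
  have sub: "N \<inter> U \<subseteq> (\<Union>u\<in>F. nbrs E w \<inter> nbrs E u \<inter> A)"
  proof
    fix y assume y: "y \<in> N \<inter> U"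
    then obtain u where u: "u \<in> F" "y \<in> insert u (nbrs E u \<inter> A)" unfolding U_def by auto
    have nE: "\<not> E w u" "\<not> E u w" using insert.prems(3) u(1) unfolding coclique_def by auto
    have "w \<noteq> u" using insert.hyps u by auto
    show "y \<in> (\<Union>u\<in>F. nbrs E w \<inter> nbrs E u \<inter> A)"
      using y u nE \<open>w \<noteq> u\<close> unfolding N_def by (auto simp: nbrs_def)
  qed
  have "card (N \<inter> U) \<le> card (\<Union>u\<in>F. nbrs E w \<inter> nbrs E u \<inter> A)"
  proof (rule card_mono[OF _ sub])
    show "finite (\<Union>u\<in>F. nbrs E w \<inter> nbrs E u \<inter> A)"
      by (rule finite_subset[of _ A]) (auto simp: insert.prems)
  qed
  also have "\<dots> \<le> (\<Sum>u\<in>F. card (nbrs E w \<inter> nbrs E u \<inter> A))"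
    by (rule card_UN_le[OF insert.hyps(1)])
  finally have cI: "int (card (N \<inter> U)) \<le> (\<Sum>u\<in>F. g w u)"
    unfolding g_def by (metis of_nat_le_iff of_nat_sum)
  have cUn: "card (N \<union> U) + card (N \<inter> U) = card N + card U"
    using card_Un_Int[OF fN fU] by simp
  have gs: "g u v = g v u" for u v unfolding g_def by (simp add: Int_commute Int_left_commute)
  have ds: "(\<Sum>u\<in>insert w F. \<Sum>v\<in>insert w F-{u}. g u v)
      = (\<Sum>u\<in>F. \<Sum>v\<in>F-{u}. g u v) + 2 * (\<Sum>v\<in>F. g w v)"
  proof -
    have "(\<Sum>u\<in>insert w F. \<Sum>v\<in>insert w F-{u}. g u v)
        = (\<Sum>v\<in>F. g w v) + (\<Sum>u\<in>F. \<Sum>v\<in>insert w F-{u}. g u v)"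
      using insert.hyps by (simp add: insert_Diff_if)
    also have "(\<Sum>u\<in>F. \<Sum>v\<in>insert w F-{u}. g u v) = (\<Sum>u\<in>F. g u w + (\<Sum>v\<in>F-{u}. g u v))"
    proof (rule sum.cong[OF refl])
      fix u assume "u \<in> F"
      then have "insert w F - {u} = insert w (F - {u})" "w \<notin> F - {u}" using insert.hyps by auto
      then show "(\<Sum>v\<in>insert w F-{u}. g u v) = g u w + (\<Sum>v\<in>F-{u}. g u v)"
        using insert.hyps by simp
    qed
    also have "\<dots> = (\<Sum>v\<in>F. g w v) + (\<Sum>u\<in>F. \<Sum>v\<in>F-{u}. g u v)"
      by (simp add: sum.distrib gs)
    finally show ?thesis by simp
  qed
  have un: "(\<Union>u\<in>insert w F. insert u (nbrs E u \<inter> A)) = N \<union> U" unfolding N_def U_def by simp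
  have ci: "card (insert w F) = card F + 1" using insert.hyps by simp
  have dist: "2 * int (card F + 1) * (int a + 1) = 2 * int (card F) * (int a + 1) + 2 * (int a + 1)"
    by (simp add: algebra_simps)
  have "2 * int (card (N \<union> U)) \<ge> 2 * int (card (insert w F)) * (int a + 1) - (\<Sum>u\<in>insert w F. \<Sum>v\<in>insert w F-{u}. g u v)"
  proof -
    have "int (card (N \<union> U)) + int (card (N \<inter> U)) = int a + 1 + int (card U)"
      using cUn cN by (metis of_nat_add of_nat_1)
    then show ?thesis unfolding ci ds dist using IH cI by (smt (verit))
  qed
  then show ?case unfolding un g_def .
qed


lemma g_bound:
  assumes drg: "distance_regular V E b c" and x: "x \<in> V" and u: "E x u" and v: "E x v"
    and uv: "u \<noteq> v" "\<not> E u v"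
  shows "int (card (nbrs E u \<inter> nbrs E v \<inter> nbrs E x)) \<le> int (c 2) - 1"
    and "c 2 \<ge> 1"
proof -
  have sg: "simple_graph V E" and cg: "connected_graph V E" using drg drg_sg drg_conn by auto
  have V: "u \<in> V" "v \<in> V" using sg_V[OF sg] u v by auto
  have "gdist V E u v = 2" using gdist_2[OF sg cg sg_sym[OF sg u] v uv] .
  then have cc: "card (nbrs E u \<inter> nbrs E v) = c 2" using card_c2[OF drg V] by simp
  have xin: "x \<in> nbrs E u \<inter> nbrs E v" using u v sg_sym[OF sg] by (auto simp: nbrs_def)
  have fin: "finite (nbrs E u \<inter> nbrs E v)" using nbrs_fin[OF sg] by simp
  have "nbrs E u \<inter> nbrs E v \<inter> nbrs E x \<subseteq> (nbrs E u \<inter> nbrs E v) - {x}"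
    using sg_irr[OF sg] by (auto simp: nbrs_def)
  then have "card (nbrs E u \<inter> nbrs E v \<inter> nbrs E x) \<le> card ((nbrs E u \<inter> nbrs E v) - {x})"
    by (rule card_mono[OF finite_Diff[OF fin]])
  also have "\<dots> = card (nbrs E u \<inter> nbrs E v) - 1" by (rule card_Diff_singleton[OF xin])
  finally have "card (nbrs E u \<inter> nbrs E v \<inter> nbrs E x) \<le> card (nbrs E u \<inter> nbrs E v) - 1" .
  moreover have "card (nbrs E u \<inter> nbrs E v) \<noteq> 0" using fin xin by auto
  ultimately show "int (card (nbrs E u \<inter> nbrs E v \<inter> nbrs E x)) \<le> int (c 2) - 1"
    and "c 2 \<ge> 1" using cc by linarith+
qed

lemma main_ineq:
  assumes drg: "distance_regular V E b c" and x: "x \<in> V" and T: "T \<subseteq> nbrs E x"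
    and cq: "coclique E T"
  shows "2 * int (card T) * (int (a_num b c 1) + 1) - 2 * int (b 0)
      \<le> int (card T) * (int (card T) - 1) * (int (c 2) - 1)
        - (\<Sum>u\<in>T. \<Sum>v\<in>T-{u}. (int (c 2) - 1) - int (card (nbrs E u \<inter> nbrs E v \<inter> nbrs E x)))"
    and "\<forall>u\<in>T. \<forall>v\<in>T-{u}. int (card (nbrs E u \<inter> nbrs E v \<inter> nbrs E x)) \<le> int (c 2) - 1"
proof -
  have sg: "simple_graph V E" and cg: "connected_graph V E" using drg drg_sg drg_conn by auto
  define A where "A = nbrs E x"
  define B where "B = int (c 2) - 1"
  define g where "g u v = int (card (nbrs E u \<inter> nbrs E v \<inter> A))" for u v
  have fA: "finite A" unfolding A_def using nbrs_fin[OF sg] .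
  have fT: "finite T" using finite_subset[OF T] fA A_def by simp
  have cA: "card A = b 0" unfolding A_def using card_nbrs[OF drg x] .
  have ca: "\<forall>w\<in>T. card (nbrs E w \<inter> A) = a_num b c 1"
    using T card_a1[OF drg] unfolding A_def by (auto simp: nbrs_def)
  have cl: "2 * int (card (\<Union>u\<in>T. insert u (nbrs E u \<inter> A))) \<ge> 2 * int (card T) * (int (a_num b c 1) + 1)
     - (\<Sum>u\<in>T. \<Sum>v\<in>T-{u}. g u v)"
    using count_lemma[OF fT fA _ cq _ ca] T sg_irr[OF sg] unfolding A_def g_def by auto
  have "card (\<Union>u\<in>T. insert u (nbrs E u \<inter> A)) \<le> card A"
    using T fA unfolding A_def by (intro card_mono) auto
  then have cl2: "2 * int (card T) * (int (a_num b c 1) + 1) - 2 * int (b 0) \<le> (\<Sum>u\<in>T. \<Sum>v\<in>T-{u}. g u v)"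
    using cl cA by linarith
  have gb: "\<forall>u\<in>T. \<forall>v\<in>T-{u}. g u v \<le> B"
  proof (intro ballI)
    fix u v assume "u \<in> T" "v \<in> T - {u}"
    then show "g u v \<le> B" unfolding g_def B_def A_def
      using g_bound(1)[OF drg x, of u v] T cq unfolding coclique_def by (auto simp: nbrs_def)
  qed
  then show "\<forall>u\<in>T. \<forall>v\<in>T-{u}. int (card (nbrs E u \<inter> nbrs E v \<inter> nbrs E x)) \<le> int (c 2) - 1"
    unfolding g_def B_def A_def .
  have "(\<Sum>u\<in>T. \<Sum>v\<in>T-{u}. B - g u v) = (\<Sum>u\<in>T. (int (card T) - 1) * B - (\<Sum>v\<in>T-{u}. g u v))"
  proof (rule sum.cong[OF refl])
    fix u assume "u \<in> T"
    then have "card T \<ge> 1" using fT card_0_eq by fastforce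
    then have "int (card (T - {u})) = int (card T) - 1" using fT \<open>u \<in> T\<close>
      by (simp add: card_Diff_singleton of_nat_diff)
    then show "(\<Sum>v\<in>T-{u}. B - g u v) = (int (card T) - 1) * B - (\<Sum>v\<in>T-{u}. g u v)"
      by (simp add: sum_subtractf)
  qed
  also have "\<dots> = int (card T) * (int (card T) - 1) * B - (\<Sum>u\<in>T. \<Sum>v\<in>T-{u}. g u v)"
    by (simp add: sum_subtractf)
  finally have eq: "(\<Sum>u\<in>T. \<Sum>v\<in>T-{u}. B - g u v) = int (card T) * (int (card T) - 1) * B - (\<Sum>u\<in>T. \<Sum>v\<in>T-{u}. g u v)" .
  have fin: "2 * int (card T) * (int (a_num b c 1) + 1) - 2 * int (b 0)
      \<le> int (card T) * (int (card T) - 1) * B - (\<Sum>u\<in>T. \<Sum>v\<in>T-{u}. B - g u v)"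
    using cl2 eq by (simp only: diff_diff_eq2 diff_self)
  then show "2 * int (card T) * (int (a_num b c 1) + 1) - 2 * int (b 0)
      \<le> int (card T) * (int (card T) - 1) * (int (c 2) - 1)
        - (\<Sum>u\<in>T. \<Sum>v\<in>T-{u}. (int (c 2) - 1) - int (card (nbrs E u \<inter> nbrs E v \<inter> nbrs E x)))"
    unfolding g_def B_def A_def .
qed

lemma real_bound:
  fixes t a k :: nat and B P :: int
  assumes "2 \<le> t" "2 * int t * (int a + 1) - 2 * int k \<le> int t * (int t - 1) * B - P"
  shows "(real t * (real a + 1) - real k) / real (t choose 2) + real_of_int P / (2 * real (t choose 2)) \<le> real_of_int B"
proof -
  have ev: "even (t * (t - 1))" by (cases "even t") auto
  have e: "2 * (t choose 2) = t * (t - 1)" using ev by (simp add: choose_two)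
  have pos: "real (t choose 2) > 0" using assms(1) by simp
  have r: "2 * real t * (real a + 1) - 2 * real k \<le> real t * (real t - 1) * real_of_int B - real_of_int P"
  proof -
    have "real_of_int (2 * int t * (int a + 1) - 2 * int k) \<le> real_of_int (int t * (int t - 1) * B - P)"
      using assms(2) of_int_le_iff by blast
    then show ?thesis by simp
  qed
  have e2: "2 * real (t choose 2) = real t * (real t - 1)"
  proof -
    have "real (2 * (t choose 2)) = real (t * (t - 1))" using e by simp
    then show ?thesis using assms(1) by (simp add: of_nat_diff)
  qed
  define C where "C = real (t choose 2)"
  have r2: "2 * (real t * (real a + 1) - real k) + real_of_int P \<le> 2 * C * real_of_int B"
  proof -
    have "2 * C * real_of_int B = real t * (real t - 1) * real_of_int B" using e2 unfolding C_def by simp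
    moreover have "2*(real t*(real a+1) - real k) = 2*real t*(real a+1) - 2*real k" by (simp add: algebra_simps)
    ultimately show ?thesis using r by linarith
  qed
  have "(real t * (real a + 1) - real k) / C + real_of_int P / (2 * C)
      = (2 * (real t * (real a + 1) - real k) + real_of_int P) / (2 * C)"
    using pos unfolding C_def by (simp add: field_simps)
  also have "\<dots> \<le> real_of_int B" using r2 pos unfolding C_def by (simp add: divide_le_eq mult.commute)
  finally show ?thesis unfolding C_def .
qed

lemma subset_with:
  assumes "finite S" "u \<in> S" "v \<in> S" "u \<noteq> v" "2 \<le> t" "t \<le> card S"
  obtains T where "T \<subseteq> S" "u \<in> T" "v \<in> T" "card T = t"
proof -
  have "card (S - {u,v}) = card S - 2" using assms by (simp add: card_Diff_subset)
  then have "t - 2 \<le> card (S - {u,v})" using assms by linarith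
  then obtain R where R: "R \<subseteq> S - {u,v}" "card R = t - 2" "finite R" by (rule obtain_subset_with_card_n)
  have nR: "u \<notin> R" "v \<notin> R" using R by auto
  have "card (insert u (insert v R)) = t" using R assms nR by simp
  moreover have "insert u (insert v R) \<subseteq> S" using R assms by auto
  ultimately show ?thesis using that[of "insert u (insert v R)"] by simp
qed



lemma bound_at:
  assumes drg: "distance_regular V E b c" and sp: "local_coclique_prop V E s"
    and x: "x \<in> V" and u: "E x u" and v: "E x v" and uv: "u \<noteq> v" "\<not> E u v"
    and t: "2 \<le> t" "t \<le> s"
  shows "\<exists>T. T \<subseteq> nbrs E x \<and> coclique E T \<and> u \<in> T \<and> v \<in> T \<and> card T = t"
proof -
  have sg: "simple_graph V E" using drg drg_sg by auto
  obtain S where S: "S \<subseteq> nbrs E x" "coclique E S" "u \<in> S" "v \<in> S" "card S \<ge> s"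
  proof -
    have "\<forall>y z. E x y \<and> E x z \<and> y \<noteq> z \<and> \<not> E y z \<longrightarrow>
        (\<exists>S. S \<subseteq> nbrs E x \<and> coclique E S \<and> y \<in> S \<and> z \<in> S \<and> card S \<ge> s)"
      using sp x unfolding local_coclique_prop_def by (rule bspec)
    then have "\<exists>S. S \<subseteq> nbrs E x \<and> coclique E S \<and> u \<in> S \<and> v \<in> S \<and> card S \<ge> s"
      using u v uv by simp
    then show ?thesis using that by blast
  qed
  have fS: "finite S" using finite_subset[OF S(1) nbrs_fin[OF sg]] .
  have tS: "t \<le> card S" using t(2) S(5) by linarith
  obtain T where T: "T \<subseteq> S" "u \<in> T" "v \<in> T" "card T = t"
    by (rule subset_with[OF fS S(3) S(4) uv(1) t(1) tS])
  have "T \<subseteq> nbrs E x" using T(1) S(1) by (rule subset_trans)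
  then show ?thesis using T coclique_sub[OF S(2) T(1)] by blast
qed

lemma exists_pair:
  assumes drg: "distance_regular V E b c" and D2: "diameter V E \<ge> 2"
  obtains x y z where "x \<in> V" "E x y" "E x z" "y \<noteq> z" "\<not> E y z"
proof -
  have sg: "simple_graph V E" and cg: "connected_graph V E" using drg drg_sg drg_conn by auto
  define G where "G = {gdist V E x y | x y. x \<in> V \<and> y \<in> V}"
  have G: "G = (\<lambda>(x,y). gdist V E x y) ` (V \<times> V)" unfolding G_def by auto
  have fV: "finite V" "V \<noteq> {}" using sg unfolding simple_graph_def by auto
  have "finite G" "G \<noteq> {}" using G fV by auto
  then have "Max G \<in> G" by (rule Max_in)
  then obtain x y where xy: "x \<in> V" "y \<in> V" "gdist V E x y = diameter V E"
    unfolding G_def diameter_def by auto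
  define n where "n = gdist V E x y"
  have n2: "n \<ge> 2" using xy D2 n_def by simp
  have "(x,y) \<in> adj_rel V E ^^ n" unfolding n_def by (rule gdist_path[OF cg xy(1,2)])
  moreover have "n = 2 + (n - 2)" using n2 by simp
  ultimately have "(x,y) \<in> adj_rel V E ^^ 2 O adj_rel V E ^^ (n - 2)" by (metis relpow_add)
  then obtain m where m: "(x,m) \<in> adj_rel V E ^^ 2" "(m,y) \<in> adj_rel V E ^^ (n - 2)" by blast
  obtain w where w: "E x w" "E w m" using m(1) relpow2[OF sg] by blast
  have mV: "m \<in> V" using sg_V[OF sg w(2)] by simp
  have "gdist V E x m \<ge> 2"
  proof (rule ccontr)
    assume "\<not> gdist V E x m \<ge> 2"
    then have j: "gdist V E x m < 2" by simp
    have "(x,m) \<in> adj_rel V E ^^ (gdist V E x m)" by (rule gdist_path[OF cg xy(1) mV])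
    with m(2) have "(x,y) \<in> adj_rel V E ^^ (gdist V E x m + (n - 2))" by (metis relcomp.relcompI relpow_add)
    then have "n \<le> gdist V E x m + (n - 2)" unfolding n_def by (rule gdist_le)
    then show False using j n2 by linarith
  qed
  then have "x \<noteq> m" "\<not> E x m" using gdist_0_iff[OF cg xy(1) mV] gdist_1_iff[OF sg cg xy(1) mV] by auto
  then show ?thesis using that[of w x m] sg_sym[OF sg w(1)] w(2) sg_V[OF sg w(1)] by blast
qed



lemma part_i:
  assumes drg: "distance_regular V E b c"
  shows "local_coclique_prop V E (nat \<lceil>real (b 0) / (real (a_num b c 1) + 1)\<rceil>)"
  unfolding local_coclique_prop_def
proof (intro ballI allI impI)
  have sg: "simple_graph V E" using drg drg_sg by auto
  fix x y z assume x: "x \<in> V" and h: "E x y \<and> E x z \<and> y \<noteq> z \<and> \<not> E y z"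
  define a where "a = a_num b c 1"
  define F where "F = {S. S \<subseteq> nbrs E x \<and> coclique E S \<and> y \<in> S \<and> z \<in> S}"
  have fN: "finite (nbrs E x)" by (rule nbrs_fin[OF sg])
  have fF: "finite F"
  proof (rule finite_subset)
    show "F \<subseteq> Pow (nbrs E x)" unfolding F_def by auto
  qed (simp add: fN)
  have yz: "{y,z} \<in> F" unfolding F_def coclique_def nbrs_def
    using h sg_irr[OF sg] sg_sym[OF sg] by auto
  have ne: "card ` F \<noteq> {}" using yz by auto
  have "Max (card ` F) \<in> card ` F" using fF ne by (intro Max_in) auto
  then obtain S where S: "S \<in> F" "card S = Max (card ` F)" by auto
  have maxS: "card S' \<le> card S" if "S' \<in> F" for S'
    using S(2) fF that by simp
  have SA: "S \<subseteq> nbrs E x" "coclique E S" using S(1) unfolding F_def by auto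
  have fS: "finite S" using finite_subset[OF SA(1) fN] .
  have cover: "nbrs E x \<subseteq> (\<Union>u\<in>S. insert u (nbrs E u \<inter> nbrs E x))"
  proof
    fix w assume w: "w \<in> nbrs E x"
    show "w \<in> (\<Union>u\<in>S. insert u (nbrs E u \<inter> nbrs E x))"
    proof (rule ccontr)
      assume nw: "w \<notin> (\<Union>u\<in>S. insert u (nbrs E u \<inter> nbrs E x))"
      have wS: "w \<notin> S" using nw by auto
      have nadj: "\<not> E u w" if "u \<in> S" for u using nw w that by (auto simp: nbrs_def)
      have "coclique E (insert w S)" unfolding coclique_def
      proof (intro ballI)
        fix p q assume "p \<in> insert w S" "q \<in> insert w S"
        then show "\<not> E p q" using SA(2) nadj sg_irr[OF sg] sg_sym[OF sg] unfolding coclique_def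
          by (metis insertE)
      qed
      then have "insert w S \<in> F" using S(1) w unfolding F_def by auto
      then have "card (insert w S) \<le> card S" by (rule maxS)
      moreover have "card (insert w S) = card S + 1" using fS wS by simp
      ultimately show False by simp
    qed
  qed
  have "b 0 = card (nbrs E x)" using card_nbrs[OF drg x] by simp
  also have "\<dots> \<le> card (\<Union>u\<in>S. insert u (nbrs E u \<inter> nbrs E x))"
    using cover fS fN by (intro card_mono) auto
  also have "\<dots> \<le> (\<Sum>u\<in>S. card (insert u (nbrs E u \<inter> nbrs E x)))"
    by (rule card_UN_le[OF fS])
  also have "\<dots> = (\<Sum>u\<in>S. a + 1)"
  proof (rule sum.cong[OF refl])
    fix u assume "u \<in> S"
    then have "E x u" using SA(1) by (auto simp: nbrs_def)
    then have "card (nbrs E u \<inter> nbrs E x) = a" unfolding a_def by (rule card_a1[OF drg])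
    moreover have "u \<notin> nbrs E u \<inter> nbrs E x" using sg_irr[OF sg] by (simp add: nbrs_def)
    moreover have "finite (nbrs E u \<inter> nbrs E x)" using fN by simp
    ultimately show "card (insert u (nbrs E u \<inter> nbrs E x)) = a + 1" by simp
  qed
  also have "\<dots> = card S * (a + 1)" by simp
  finally have "b 0 \<le> card S * (a + 1)" .
  then have "real (b 0) \<le> real (card S) * (real a + 1)"
    by (metis of_nat_le_iff of_nat_mult of_nat_Suc Suc_eq_plus1 add.commute)
  then have "real (b 0) / (real a + 1) \<le> real (card S)"
    by (simp add: divide_le_eq add_pos_nonneg)
  then have "nat \<lceil>real (b 0) / (real a + 1)\<rceil> \<le> card S"
    by (simp add: nat_le_iff ceiling_le_iff)
  then show "\<exists>S. S \<subseteq> nbrs E x \<and> coclique E S \<and> y \<in> S \<and> z \<in> S \<and> nat \<lceil>real (b 0) / (real (a_num b c 1) + 1)\<rceil> \<le> card S"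
    using S(1) unfolding F_def a_def by auto
qed



theorem proposition3:
  fixes V :: "'a set" and E :: "'a \<Rightarrow> 'a \<Rightarrow> bool"
    and b c :: "nat \<Rightarrow> nat" and k D s :: nat
  assumes drg: "distance_regular V E b c"
    and k: "k = b 0"
    and D: "D = diameter V E" and D2: "D \<ge> 2"
    and s_prop: "local_coclique_prop V E s"
    and s_max: "\<forall>t. local_coclique_prop V E t \<longrightarrow> t \<le> s"
  shows "real s \<ge> real k / (real (a_num b c 1) + 1)
    \<and> (let M = Max ((\<lambda>t. (real t * (real (a_num b c 1) + 1) - real k) / real (t choose 2)) ` {2..s})
       in real (c 2) - 1 \<ge> M \<and> (real (c 2) - 1 = M \<longrightarrow> terwilliger V E))"
proof -
  have sg: "simple_graph V E" and cg: "connected_graph V E" using drg drg_sg drg_conn by auto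
  define a where "a = a_num b c 1"
  define f where "f = (\<lambda>t. (real t * (real (a_num b c 1) + 1) - real k) / real (t choose 2))"
  define M where "M = Max (f ` {2..s})"
  have i: "real s \<ge> real k / (real (a_num b c 1) + 1)"
  proof -
    have "nat \<lceil>real (b 0) / (real (a_num b c 1) + 1)\<rceil> \<le> s"
      using s_max part_i[OF drg] by blast
    then have "real (nat \<lceil>real (b 0) / (real (a_num b c 1) + 1)\<rceil>) \<le> real s" by (rule of_nat_mono)
    then show ?thesis using real_nat_ceiling_ge[of "real (b 0) / (real (a_num b c 1) + 1)"] unfolding k
      by linarith
  qed
  have l2: "local_coclique_prop V E 2" unfolding local_coclique_prop_def
  proof (intro ballI allI impI)
    fix x y z assume x: "x \<in> V" and h: "E x y \<and> E x z \<and> y \<noteq> z \<and> \<not> E y z"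
    have "{y,z} \<subseteq> nbrs E x" "coclique E {y,z}" "card {y,z} = 2"
      using h sg_irr[OF sg] sg_sym[OF sg] by (auto simp: nbrs_def coclique_def)
    then show "\<exists>S. S \<subseteq> nbrs E x \<and> coclique E S \<and> y \<in> S \<and> z \<in> S \<and> 2 \<le> card S"
      by (intro exI[of _ "{y,z}"]) simp
  qed
  have s2: "2 \<le> s" using s_max l2 by blast
  obtain x0 y0 z0 where p: "x0 \<in> V" "E x0 y0" "E x0 z0" "y0 \<noteq> z0" "\<not> E y0 z0"
    using exists_pair[OF drg] D D2 by metis
  have key: "f t + real_of_int P / (2 * real (t choose 2)) \<le> real (c 2) - 1"
    if "x \<in> V" "T \<subseteq> nbrs E x" "coclique E T" "card T = t" "2 \<le> t"
       "P = (\<Sum>u\<in>T. \<Sum>v\<in>T-{u}. (int (c 2) - 1) - int (card (nbrs E u \<inter> nbrs E v \<inter> nbrs E x)))"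
    for x T t P
  proof -
    have "2 * int t * (int a + 1) - 2 * int k \<le> int t * (int t - 1) * (int (c 2) - 1) - P"
      using main_ineq(1)[OF drg that(1-3)] that(4,6) k unfolding a_def by simp
    from real_bound[OF that(5) this] show ?thesis unfolding f_def a_def by simp
  qed
  have Pnn: "(\<Sum>u\<in>T. \<Sum>v\<in>T-{u}. (int (c 2) - 1) - int (card (nbrs E u \<inter> nbrs E v \<inter> nbrs E x))) \<ge> 0"
    if "x \<in> V" "T \<subseteq> nbrs E x" "coclique E T" for x T
    using main_ineq(2)[OF drg that] by (intro sum_nonneg) auto
  have ft: "f t \<le> real (c 2) - 1" if "t \<in> {2..s}" for t
  proof -
    have t: "2 \<le> t" "t \<le> s" using that by auto
    obtain T where T: "T \<subseteq> nbrs E x0" "coclique E T" "y0 \<in> T" "z0 \<in> T" "card T = t"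
      using bound_at[OF drg s_prop p t] by blast
    define P where "P = (\<Sum>u\<in>T. \<Sum>v\<in>T-{u}. (int (c 2) - 1) - int (card (nbrs E u \<inter> nbrs E v \<inter> nbrs E x0)))"
    have "P \<ge> 0" unfolding P_def using Pnn[OF p(1) T(1,2)] .
    moreover have "real (t choose 2) > 0" using t by simp
    ultimately have "real_of_int P / (2 * real (t choose 2)) \<ge> 0" by simp
    then show ?thesis using key[OF p(1) T(1,2,5) t(1) P_def] by linarith
  qed
  have finM: "finite (f ` {2..s})" "f ` {2..s} \<noteq> {}" using s2 by auto
  have ii1: "M \<le> real (c 2) - 1" unfolding M_def using finM ft by (simp add: Max_le_iff)
  have ii2: "terwilliger V E" if eq: "real (c 2) - 1 = M"
  proof -
    have "M \<in> f ` {2..s}" unfolding M_def using finM by (rule Max_in)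
    then obtain t0 where t0: "t0 \<in> {2..s}" "f t0 = M" by auto
    have c1: "c 2 \<ge> 1" using g_bound(2)[OF drg p] .
    have notc: "\<not> complete_graph V E"
      using p sg_V[OF sg] unfolding complete_graph_def by blast
    have cl: "clique E (nbrs E u \<inter> nbrs E v) \<and> card (nbrs E u \<inter> nbrs E v) = c 2"
      if uv: "u \<in> V" "v \<in> V" "gdist V E u v = 2" for u v
    proof
      show "card (nbrs E u \<inter> nbrs E v) = c 2" by (rule card_c2[OF drg uv])
      show "clique E (nbrs E u \<inter> nbrs E v)" unfolding clique_def
      proof (intro ballI impI)
        fix w1 w2 assume w: "w1 \<in> nbrs E u \<inter> nbrs E v" "w2 \<in> nbrs E u \<inter> nbrs E v" "w1 \<noteq> w2"
        show "E w1 w2"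
        proof (rule ccontr)
          assume nE: "\<not> E w1 w2"
          have e1: "E w1 u" "E w1 v" using w(1) sg_sym[OF sg] by (auto simp: nbrs_def)
          have w1V: "w1 \<in> V" using sg_V[OF sg e1(1)] by simp
          have nuv: "u \<noteq> v" "\<not> E u v" using gdist_2_imp[OF sg cg uv] by auto
          have t0': "2 \<le> t0" "t0 \<le> s" using t0(1) by auto
          obtain T where T: "T \<subseteq> nbrs E w1" "coclique E T" "u \<in> T" "v \<in> T" "card T = t0"
            using bound_at[OF drg s_prop w1V e1 nuv t0'] by blast
          define g where "g p q = (int (c 2) - 1) - int (card (nbrs E p \<inter> nbrs E q \<inter> nbrs E w1))" for p q
          define P where "P = (\<Sum>p\<in>T. \<Sum>q\<in>T-{p}. g p q)"
          have gnn: "\<forall>p\<in>T. \<forall>q\<in>T-{p}. g p q \<ge> 0"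
            using main_ineq(2)[OF drg w1V T(1,2)] unfolding g_def by auto
          have fN: "finite (nbrs E w1)" by (rule nbrs_fin[OF sg])
          have fT: "finite T" using finite_subset[OF T(1) fN] .
          have guv: "g u v \<ge> 1"
          proof -
            have fC: "finite (nbrs E u \<inter> nbrs E v)" using nbrs_fin[OF sg] by simp
            have "nbrs E u \<inter> nbrs E v \<inter> nbrs E w1 \<subseteq> (nbrs E u \<inter> nbrs E v) - {w1, w2}"
              using nE sg_irr[OF sg] by (auto simp: nbrs_def)
            then have "card (nbrs E u \<inter> nbrs E v \<inter> nbrs E w1) \<le> card ((nbrs E u \<inter> nbrs E v) - {w1, w2})"
              by (rule card_mono[OF finite_Diff[OF fC]])
            also have "\<dots> = card (nbrs E u \<inter> nbrs E v) - 2"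
              using w by (subst card_Diff_subset) auto
            also have "\<dots> = c 2 - 2" using card_c2[OF drg uv] by simp
            finally have "card (nbrs E u \<inter> nbrs E v \<inter> nbrs E w1) \<le> c 2 - 2" .
            moreover have "card (nbrs E u \<inter> nbrs E v) \<ge> 2"
            proof -
              have "{w1, w2} \<subseteq> nbrs E u \<inter> nbrs E v" using w by auto
              then have "card {w1, w2} \<le> card (nbrs E u \<inter> nbrs E v)" by (rule card_mono[OF fC])
              then show ?thesis using w(3) by simp
            qed
            ultimately show ?thesis using card_c2[OF drg uv] unfolding g_def by linarith
          qed
          have "g u v \<le> (\<Sum>q\<in>T-{u}. g u q)"
            using gnn T(3,4) nuv(1) fT by (intro member_le_sum) auto
          also have "\<dots> \<le> P" unfolding P_def
            using gnn T(3) fT by (intro member_le_sum sum_nonneg) auto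
          finally have P1: "P \<ge> 1" using guv by linarith
          have "f t0 + real_of_int P / (2 * real (t0 choose 2)) \<le> real (c 2) - 1"
            using key[OF w1V T(1,2,5) t0'(1)] unfolding P_def g_def by blast
          moreover have "real (t0 choose 2) > 0" using t0' by simp
          then have "real_of_int P / (2 * real (t0 choose 2)) > 0" using P1 by simp
          ultimately show False using t0(2) eq by linarith
        qed
      qed
    qed
    show ?thesis unfolding terwilliger_def
      using cg notc c1 cl by blast
  qed
  show ?thesis unfolding Let_def using i ii1 ii2 unfolding M_def f_def by blast
qed

end
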